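(* Let $q$ be such that the Jost solutions exist and let $\Phi^\pm=[\phi_1^\pm,\phi_2^\pm]=(\phi^\pm_{ij})$, with columns extended analytically as usual ($\phi_1^-,\phi_2^+$ to $\mathbb{D}_+$, $\phi_1^+,\phi_2^-$ to $\mathbb{D}_-$). Define the squared eigenfunctions $$\Omega_{+,1}=\begin{pmatrix}(\phi^-_{11})^2\\(\phi^-_{21})^2\end{pmatrix},\ \Omega_{-,2}=\begin{pmatrix}(\phi^-_{12})^2\\(\phi^-_{22})^2\end{pmatrix},\ \Omega_{-,1}=\begin{pmatrix}(\phi^+_{21})^2\\-(\phi^+_{11})^2\end{pmatrix},\ \Omega_{+,2}=\begin{pmatrix}(\phi^+_{22})^2\\-(\phi^+_{12})^2\end{pmatrix}.$$ Then, with $\hat q=q_x$, $\hat r=q_x^*$, $$\mathcal{L}(\sigma_3\partial_x\Omega_{+,1})=-\lambda^2\sigma_3\partial_x\Omega_{+,1},\quad \mathcal{L}(\sigma_3\partial_x\Omega_{-,2})=-\lambda^2\sigma_3\partial_x\Omega_{-,2},$$ $$\widetilde{\mathcal{L}}(\sigma_3\partial_x\Omega_{-,1})=-\lambda^2\sigma_3\partial_x\Omega_{-,1},\quad \widetilde{\mathcal{L}}(\sigma_3\partial_x\Omega_{+,2})=-\lambda^2\sigma_3\partial_x\Omega_{+,2},$$ for $\lambda$ in the respective domains of analyticity (or on $\Sigma$).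
   Context: $\sigma_3=\mathrm{diag}(1,-1)$. $q(x,t)$ complex-valued, rapidly decaying with its derivatives as $|x|\to\infty$; $Q=\begin{pmatrix}0&q\\ q^*&0\end{pmatrix}$. $\Phi^\pm(\lambda;x,t)$ are the solutions of $\Phi_x=(-\mathrm{i}\lambda^2\sigma_3+\lambda Q_x)\Phi$ with $\Phi^\pm e^{\mathrm{i}\lambda^2x\sigma_3}\to\mathbb{I}$ as $x\to\pm\infty$. $\Sigma=\mathbb{R}\cup\mathrm{i}\mathbb{R}$, $\mathbb{D}_+=\{\arg\lambda\in(0,\pi/2)\cup(\pi,3\pi/2)\}$, $\mathbb{D}_-=\{\arg\lambda\in(\pi/2,\pi)\cup(3\pi/2,2\pi)\}$. With $\partial=\partial_x$, $\partial_-^{-1}f=\int_{-\infty}^xf(y)\mathrm{d}y$, $\partial_+^{-1}f=\int_x^{+\infty}f(y)\mathrm{d}y$, the recursion operator and its adjoint act on vectors $(w_1,w_2)^\top$ by $$\mathcal{L}=-\frac12\begin{pmatrix}\mathrm{i}\partial+\hat q_x\partial_-^{-1}\hat r+\hat q\hat r&\hat q_x\partial_-^{-1}\hat q+\hat q^2\\ \hat r_x\partial_-^{-1}\hat r+\hat r^2&-\mathrm{i}\partial+\hat r_x\partial_-^{-1}\hat q+\hat q\hat r\end{pmatrix},\quad \widetilde{\mathcal{L}}=-\frac12\begin{pmatrix}-\mathrm{i}\partial-\hat r_x\partial_+^{-1}\hat q+\hat q\hat r&\hat r_x\partial_+^{-1}\hat r-\hat r^2\\ \hat q_x\partial_+^{-1}\hat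 q-\hat q^2&\mathrm{i}\partial-\hat q_x\partial_+^{-1}\hat r+\hat q\hat r\end{pmatrix},$$ where e.g. $\hat q_x\partial_-^{-1}\hat r$ means $w\mapsto \hat q_x\int_{-\infty}^x\hat r(y)w(y)\mathrm{d}y$ and $\hat q\hat r$ is multiplication. *)

theory Defs
  imports "HOL-Analysis.Analysis"
begin

definition dv :: "(real \<Rightarrow> complex) \<Rightarrow> real \<Rightarrow> complex" where
  "dv f = (\<lambda>x. vector_derivative f (at x))"

text \<open>The potential q(x) at a fixed time t (t is a parameter only).
  Smooth, and rapidly decaying together with all its derivatives.\<close>
definition rapidly_decaying :: "(real \<Rightarrow> complex) \<Rightarrow> bool" where
  "rapidly_decaying (q :: real \<Rightarrow> complex) \<longleftrightarrow>
     (\<forall>k (x::real). ((dv ^^ k) q) differentiable (at x)) \<and>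
     (\<forall>k n. \<exists>C. \<forall>x::real. (1 + \<bar>x\<bar>) ^ n * norm ((dv ^^ k) q x) \<le> C)"

text \<open>Domains: D+ = {arg in (0,pi/2) or (pi,3pi/2)}, D- = {arg in (pi/2,pi) or (3pi/2,2pi)},
  Sigma = R union iR. Arg takes values in (-pi,pi].\<close>
definition D_plus :: "complex set" where
  "D_plus = {l. l \<noteq> 0 \<and> (Arg l \<in> {0<..<pi/2} \<or> Arg l \<in> {-pi<..<-pi/2})}"

definition D_minus :: "complex set" where
  "D_minus = {l. l \<noteq> 0 \<and> (Arg l \<in> {pi/2<..<pi} \<or> Arg l \<in> {-pi/2<..<0})}"

definition Sigma_contour :: "complex set" where
  "Sigma_contour = {l. Im l = 0 \<or> Re l = 0}"

text \<open>(v1,v2) is a column solution of  Phi_x = (-i l^2 sigma3 + l Q_x) Phi.\<close>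
definition lax_sol :: "(real \<Rightarrow> complex) \<Rightarrow> complex \<Rightarrow> (real \<Rightarrow> complex) \<Rightarrow> (real \<Rightarrow> complex) \<Rightarrow> bool" where
  "lax_sol q l v1 v2 \<longleftrightarrow>
     (\<forall>x. (v1 has_vector_derivative (- \<i> * l^2 * v1 x + l * dv q x * v2 x)) (at x) \<and>
          (v2 has_vector_derivative (l * cnj (dv q x) * v1 x + \<i> * l^2 * v2 x)) (at x))"

text \<open>Jost columns, characterised by the ODE and the normalisation
  Phi^{+-} e^{i l^2 x sigma3} -> I as x -> +-infinity.\<close>
definition jost_minus_1 where
  "jost_minus_1 q l v1 v2 \<longleftrightarrow> lax_sol q l v1 v2 \<and>
     ((\<lambda>x. v1 x * exp (\<i> * l^2 * of_real x)) \<longlongrightarrow> 1) at_bot \<and>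
     ((\<lambda>x. v2 x * exp (\<i> * l^2 * of_real x)) \<longlongrightarrow> 0) at_bot"

definition jost_minus_2 where
  "jost_minus_2 q l v1 v2 \<longleftrightarrow> lax_sol q l v1 v2 \<and>
     ((\<lambda>x. v1 x * exp (- \<i> * l^2 * of_real x)) \<longlongrightarrow> 0) at_bot \<and>
     ((\<lambda>x. v2 x * exp (- \<i> * l^2 * of_real x)) \<longlongrightarrow> 1) at_bot"

definition jost_plus_1 where
  "jost_plus_1 q l v1 v2 \<longleftrightarrow> lax_sol q l v1 v2 \<and>
     ((\<lambda>x. v1 x * exp (\<i> * l^2 * of_real x)) \<longlongrightarrow> 1) at_top \<and>
     ((\<lambda>x. v2 x * exp (\<i> * l^2 * of_real x)) \<longlongrightarrow> 0) at_top"

definition jost_plus_2 where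
  "jost_plus_2 q l v1 v2 \<longleftrightarrow> lax_sol q l v1 v2 \<and>
     ((\<lambda>x. v1 x * exp (- \<i> * l^2 * of_real x)) \<longlongrightarrow> 0) at_top \<and>
     ((\<lambda>x. v2 x * exp (- \<i> * l^2 * of_real x)) \<longlongrightarrow> 1) at_top"

text \<open>Recursion operator L applied to (w1,w2), with coefficients qh, rh
  (partial_-^{-1} f = integral over (-inf,x]).\<close>
definition L_op :: "(real \<Rightarrow> complex) \<Rightarrow> (real \<Rightarrow> complex) \<Rightarrow> (real \<Rightarrow> complex) \<Rightarrow> (real \<Rightarrow> complex)
                     \<Rightarrow> real \<Rightarrow> complex \<times> complex" where
  "L_op qh rh w1 w2 x =
     (let I1 = integral {..x} (\<lambda>y. rh y * w1 y);
          I2 = integral {..x} (\<lambda>y. qh y * w2 y)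
      in (- (1/2) * (\<i> * dv w1 x + dv qh x * I1 + qh x * rh x * w1 x
                     + dv qh x * I2 + (qh x)^2 * w2 x),
          - (1/2) * (dv rh x * I1 + (rh x)^2 * w1 x
                     - \<i> * dv w2 x + dv rh x * I2 + qh x * rh x * w2 x)))"

definition L_defined :: "(real \<Rightarrow> complex) \<Rightarrow> (real \<Rightarrow> complex) \<Rightarrow> (real \<Rightarrow> complex) \<Rightarrow> (real \<Rightarrow> complex) \<Rightarrow> bool" where
  "L_defined qh rh w1 w2 \<longleftrightarrow> (\<forall>x. (\<lambda>y. rh y * w1 y) integrable_on {..x} \<and> (\<lambda>y. qh y * w2 y) integrable_on {..x})"

text \<open>Adjoint operator tilde-L (partial_+^{-1} f = integral over [x,+inf)).\<close>
definition Lt_op :: "(real \<Rightarrow> complex) \<Rightarrow> (real \<Rightarrow> complex) \<Rightarrow> (real \<Rightarrow> complex) \<Rightarrow> (real \<Rightarrow> complex)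
                     \<Rightarrow> real \<Rightarrow> complex \<times> complex" where
  "Lt_op qh rh w1 w2 x =
     (let I1 = integral {x..} (\<lambda>y. qh y * w1 y);
          I2 = integral {x..} (\<lambda>y. rh y * w2 y)
      in (- (1/2) * (- \<i> * dv w1 x - dv rh x * I1 + qh x * rh x * w1 x
                     + dv rh x * I2 - (rh x)^2 * w2 x),
          - (1/2) * (dv qh x * I1 - (qh x)^2 * w1 x
                     + \<i> * dv w2 x - dv qh x * I2 + qh x * rh x * w2 x)))"

definition Lt_defined :: "(real \<Rightarrow> complex) \<Rightarrow> (real \<Rightarrow> complex) \<Rightarrow> (real \<Rightarrow> complex) \<Rightarrow> (real \<Rightarrow> complex) \<Rightarrow> bool" where
  "Lt_defined qh rh w1 w2 \<longleftrightarrow> (\<forall>x. (\<lambda>y. qh y * w1 y) integrable_on {x..} \<and> (\<lambda>y. rh y * w2 y) integrable_on {x..})"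

end

theory Submission
  imports Defs "HOL-Probability.Sinc_Integral"
begin


lemma alg_L:
  fixes u v qh rh qh' rh' l I1 I2 du dw W1 W2 D1 D2 :: complex
  assumes I: "I1 + I2 = -2*\<i>*l*u* v"
    and du: "du = - \<i> * l^2 * u + l * qh * v" and dw: "dw = l * rh * u + \<i> * l^2 * v"
    and W1: "W1 = 2 * u * du" and W2: "W2 = - (2 * v * dw)"
    and D1: "D1 = 2*du*du + 2*u*(- \<i> * l^2 * du + l*(qh' * v + qh * dw))"
    and D2: "D2 = - (2*dw*dw + 2* v *(l*(rh'*u + rh*du) + \<i> * l^2 * dw))"
  shows "- (1/2) * (\<i> * D1 + qh' * I1 + qh * rh * W1 + qh' * I2 + qh^2 * W2) = - (l^2 * W1)"
    and "- (1/2) * (rh' * I1 + rh^2 * W1 - \<i> * D2 + rh' * I2 + qh * rh * W2) = - (l^2 * W2)"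
proof -
  have I2: "I2 = -2*\<i>*l*u* v - I1" using I by (simp add: algebra_simps)
  show "- (1/2) * (\<i> * D1 + qh' * I1 + qh * rh * W1 + qh' * I2 + qh^2 * W2) = - (l^2 * W1)"
    unfolding I2 D1 W1 W2 du dw by (simp add: algebra_simps power2_eq_square power3_eq_cube)
  show "- (1/2) * (rh' * I1 + rh^2 * W1 - \<i> * D2 + rh' * I2 + qh * rh * W2) = - (l^2 * W2)"
    unfolding I2 D2 W1 W2 du dw by (simp add: algebra_simps power2_eq_square power3_eq_cube)
qed

lemma alg_Lt:
  fixes u v qh rh qh' rh' l I1 I2 du dw W1 W2 D1 D2 :: complex
  assumes I: "I1 - I2 = -2*\<i>*l*u* v"
    and du: "du = - \<i> * l^2 * u + l * qh * v" and dw: "dw = l * rh * u + \<i> * l^2 * v"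
    and W1: "W1 = 2 * v * dw" and W2: "W2 = 2 * u * du"
    and D1: "D1 = 2*dw*dw + 2* v *(l*(rh'*u + rh*du) + \<i> * l^2 * dw)"
    and D2: "D2 = 2*du*du + 2*u*(- \<i> * l^2 * du + l*(qh' * v + qh * dw))"
  shows "- (1/2) * (- \<i> * D1 - rh' * I1 + qh * rh * W1 + rh' * I2 - rh^2 * W2) = - (l^2 * W1)"
    and "- (1/2) * (qh' * I1 - qh^2 * W1 + \<i> * D2 - qh' * I2 + qh * rh * W2) = - (l^2 * W2)"
proof -
  have I2: "I2 = I1 + 2*\<i>*l*u* v" using I by (simp add: algebra_simps)
  show "- (1/2) * (- \<i> * D1 - rh' * I1 + qh * rh * W1 + rh' * I2 - rh^2 * W2) = - (l^2 * W1)"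
    unfolding I2 D1 W1 W2 du dw by (simp add: algebra_simps power2_eq_square power3_eq_cube)
  show "- (1/2) * (qh' * I1 - qh^2 * W1 + \<i> * D2 - qh' * I2 + qh * rh * W2) = - (l^2 * W2)"
    unfolding I2 D2 W1 W2 du dw by (simp add: algebra_simps power2_eq_square power3_eq_cube)
qed


lemma inv_sq_int: "(\<lambda>x::real. inverse (1 + x^2)) integrable_on UNIV"
  using integrable_on_lborel[OF integrable_inverse_1_plus_square[unfolded set_integrable_def einterval_eq_UNIV]]
  by simp

lemma int_bound_gen:
  fixes f g :: "real \<Rightarrow> complex"
  assumes cf: "continuous_on UNIV f" and cg: "continuous_on UNIV g"
    and fb: "\<And>y. norm (f y) \<le> C * inverse (1 + y^2)"
    and gb: "\<And>y. y \<in> S \<Longrightarrow> norm (g y) \<le> B" and S: "closed S" and ne: "S \<noteq> {}"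
  shows "(\<lambda>y. f y * g y) absolutely_integrable_on S"
proof -
  have C: "C \<ge> 0" using fb[of 0] norm_ge_zero[of "f 0"] by (simp del: norm_ge_zero)
  obtain s where "s \<in> S" using ne by blast
  then have B: "B \<ge> 0" using gb[of s] by (smt (verit) norm_ge_zero)
  have Sl: "S \<in> sets lebesgue" using S by (simp add: borel_closed)
  have gi: "(\<lambda>y. (C*B) * inverse (1 + y^2)) integrable_on UNIV"
      using integrable_on_cmult_left[OF inv_sq_int] by simp
  have bd: "norm (if y \<in> S then f y * g y else 0) \<le> C * B * inverse (1 + y\<^sup>2)" for y
    proof (cases "y \<in> S")
      case True
      have iy: "0 \<le> inverse (1 + y^2)" by (simp add: add_nonneg_nonneg)
      have "norm (f y * g y) \<le> (C * inverse (1 + y^2)) * B"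
        unfolding norm_mult by (rule mult_mono[OF fb gb[OF True]]) (use B C iy in auto)
      then show ?thesis using True by (simp add: mult_ac)
    next
      case False then show ?thesis using B C by (simp add: add_pos_nonneg)
    qed
  have "(\<lambda>y. if y \<in> S then f y * g y else 0) integrable_on UNIV"
  proof (rule measurable_bounded_by_integrable_imp_integrable[where g="\<lambda>y. (C*B) * inverse (1 + y^2)"])
    have "continuous_on S (\<lambda>y. f y * g y)"
      using cf cg by (intro continuous_intros; auto intro: continuous_on_subset)
    then have "(\<lambda>y. f y * g y) \<in> borel_measurable (lebesgue_on S)"
      by (rule continuous_imp_measurable_on_sets_lebesgue[OF _ Sl])
    then show "(\<lambda>y. if y \<in> S then f y * g y else 0) \<in> borel_measurable (lebesgue_on UNIV)"
      using borel_measurable_if_I[OF _ Sl] by (simp add: lebesgue_on_UNIV_eq)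
    show "(\<lambda>y. (C*B) * inverse (1 + y^2)) integrable_on UNIV"
      using integrable_on_cmult_left[OF inv_sq_int] by simp
    show "norm (if y \<in> S then f y * g y else 0) \<le> C * B * inverse (1 + y\<^sup>2)" if "y \<in> UNIV" for y
    proof (cases "y \<in> S")
      case True
      have iy: "0 \<le> inverse (1 + y^2)" by (simp add: add_nonneg_nonneg)
      have "norm (f y * g y) \<le> (C * inverse (1 + y^2)) * B"
        unfolding norm_mult by (rule mult_mono[OF fb gb[OF True]]) (use B C iy in auto)
      then show ?thesis using True by (simp add: mult_ac)
    next
      case False then show ?thesis using B C by (simp add: add_pos_nonneg)
    qed
  qed simp
  note hint = this
  have "(\<lambda>y. if y \<in> S then f y * g y else 0) absolutely_integrable_on UNIV"
    by (rule absolutely_integrable_integrable_bound[where g="\<lambda>y. (C*B) * inverse (1 + y^2)"]) (use bd hint gi in auto)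
  then show ?thesis using absolutely_integrable_restrict_UNIV by blast
qed

lemma int_prim_bot:
  fixes F G :: "real \<Rightarrow> complex"
  assumes Fi: "F absolutely_integrable_on {..x}"
    and prim: "\<And>a. a \<le> x \<Longrightarrow> (F has_integral (G x - G a)) {a..x}"
    and lim: "(G \<longlongrightarrow> 0) at_bot"
  shows "integral {..x} F = G x"
proof -
  define fk where "fk k = (\<lambda>y. if y \<in> {-real k..x} then F y else 0)" for k :: nat
  have Fint: "F integrable_on {a..x}" for a
  proof (cases "a \<le> x")
    case True then show ?thesis using prim by blast
  next
    case False then show ?thesis by (simp add: integrable_on_empty)
  qed
  have int: "fk k integrable_on {..x}" for k
    unfolding fk_def integrable_restrict_Int using Fint[of "-real k"]
    by (metis Int_absorb2 atLeastAtMost_iff atMost_iff subsetI)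
  have h: "(\<lambda>y. norm (F y)) integrable_on {..x}" using Fi absolutely_integrable_on_def by blast
  have le: "norm (fk k y) \<le> norm (F y)" for k y by (simp add: fk_def)
  have conv: "(\<lambda>k. fk k y) \<longlonglongrightarrow> F y" if "y \<in> {..x}" for y
  proof (rule tendsto_eventually)
    obtain N :: nat where "real N \<ge> - y" using real_arch_simple by blast
    then show "\<forall>\<^sub>F k in sequentially. fk k y = F y"
      using that unfolding fk_def eventually_sequentially
      by (intro exI[of _ N]) auto
  qed
  have lim1: "(\<lambda>k. integral {..x} (fk k)) \<longlonglongrightarrow> integral {..x} F"
    using dominated_convergence(2)[OF int h _ conv] le by blast
  have "(\<lambda>k. G (- real k)) \<longlonglongrightarrow> 0"
    by (rule filterlim_compose[OF lim]) (simp add: filterlim_uminus_at_bot filterlim_real_sequentially)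
  then have lim2: "(\<lambda>k. G x - G (- real k)) \<longlonglongrightarrow> G x"
    using tendsto_diff[OF tendsto_const[of "G x"]] by fastforce
  have ev: "\<forall>\<^sub>F k in sequentially. integral {..x} (fk k) = G x - G (- real k)"
  proof -
    obtain N :: nat where "real N \<ge> - x" using real_arch_simple by blast
    then show ?thesis unfolding eventually_sequentially
    proof (intro exI[of _ N] allI impI)
      fix k assume "N \<le> k"
      then have kx: "- real k \<le> x" using \<open>real N \<ge> - x\<close> by linarith
      have "integral {..x} (fk k) = integral ({-real k..x} \<inter> {..x}) F"
        unfolding fk_def by (rule integral_restrict_Int)
      also have "{-real k..x} \<inter> {..x} = {-real k..x}" by auto
      finally show "integral {..x} (fk k) = G x - G (- real k)"
        using prim[OF kx] integral_unique by simp
    qed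
  qed
  have "(\<lambda>k. integral {..x} (fk k)) \<longlonglongrightarrow> G x"
    using lim2 ev by (simp add: tendsto_cong)
  then show ?thesis using lim1 LIMSEQ_unique by blast
qed

lemma int_prim_top:
  fixes F G :: "real \<Rightarrow> complex"
  assumes Fi: "F absolutely_integrable_on {x..}"
    and prim: "\<And>b. x \<le> b \<Longrightarrow> (F has_integral (G b - G x)) {x..b}"
    and lim: "(G \<longlongrightarrow> 0) at_top"
  shows "integral {x..} F = - G x"
proof -
  define fk where "fk k = (\<lambda>y. if y \<in> {x..real k} then F y else 0)" for k :: nat
  have Fint: "F integrable_on {x..b}" for b
  proof (cases "x \<le> b")
    case True then show ?thesis using prim by blast
  next
    case False then show ?thesis by (simp add: integrable_on_empty)
  qed
  have int: "fk k integrable_on {x..}" for k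
    unfolding fk_def integrable_restrict_Int using Fint[of "real k"]
    by (metis Int_absorb2 atLeastAtMost_iff atLeast_iff subsetI)
  have h: "(\<lambda>y. norm (F y)) integrable_on {x..}" using Fi absolutely_integrable_on_def by blast
  have le: "norm (fk k y) \<le> norm (F y)" for k y by (simp add: fk_def)
  have conv: "(\<lambda>k. fk k y) \<longlonglongrightarrow> F y" if "y \<in> {x..}" for y
  proof (rule tendsto_eventually)
    obtain N :: nat where "real N \<ge> y" using real_arch_simple by blast
    then show "\<forall>\<^sub>F k in sequentially. fk k y = F y"
      using that unfolding fk_def eventually_sequentially
      by (intro exI[of _ N]) auto
  qed
  have lim1: "(\<lambda>k. integral {x..} (fk k)) \<longlonglongrightarrow> integral {x..} F"
    using dominated_convergence(2)[OF int h _ conv] le by blast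
  have "(\<lambda>k. G (real k)) \<longlonglongrightarrow> 0"
    by (rule filterlim_compose[OF lim]) (simp add: filterlim_real_sequentially)
  then have lim2: "(\<lambda>k. G (real k) - G x) \<longlonglongrightarrow> - G x"
    using tendsto_diff[OF _ tendsto_const[of "G x"]] by fastforce
  have ev: "\<forall>\<^sub>F k in sequentially. integral {x..} (fk k) = G (real k) - G x"
  proof -
    obtain N :: nat where "real N \<ge> x" using real_arch_simple by blast
    then show ?thesis unfolding eventually_sequentially
    proof (intro exI[of _ N] allI impI)
      fix k assume "N \<le> k"
      then have kx: "x \<le> real k" using \<open>real N \<ge> x\<close> by linarith
      have "integral {x..} (fk k) = integral ({x..real k} \<inter> {x..}) F"
        unfolding fk_def by (rule integral_restrict_Int)
      also have "{x..real k} \<inter> {x..} = {x..real k}" by auto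
      finally show "integral {x..} (fk k) = G (real k) - G x"
        using prim[OF kx] integral_unique by simp
    qed
  qed
  have "(\<lambda>k. integral {x..} (fk k)) \<longlonglongrightarrow> - G x"
    using lim2 ev by (simp add: tendsto_cong)
  then show ?thesis using lim1 LIMSEQ_unique by blast
qed

lemma Im_sq_Arg: "l \<noteq> 0 \<Longrightarrow> Im (l^2) = (norm l)^2 * sin (2 * Arg l)"
proof -
  assume nz: "l \<noteq> 0"
  have "Im (l^2) = 2 * Re l * Im l" by (simp add: power2_eq_square)
  also have "\<dots> = 2 * (norm l * cos (Arg l)) * (norm l * sin (Arg l))"
    using nz by (simp add: cos_Arg sin_Arg)
  also have "\<dots> = (norm l)^2 * sin (2 * Arg l)"
    by (simp add: sin_double power2_eq_square)
  finally show ?thesis .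
qed

lemma Dplus_Im: "l \<in> D_plus \<union> Sigma_contour \<Longrightarrow> Im (l^2) \<ge> 0"
proof -
  assume "l \<in> D_plus \<union> Sigma_contour"
  then consider "l \<in> D_plus" | "Im l = 0 \<or> Re l = 0" unfolding Sigma_contour_def by blast
  then show ?thesis
  proof cases
    case 1
    then have nz: "l \<noteq> 0" and A: "Arg l \<in> {0<..<pi/2} \<or> Arg l \<in> {-pi<..<-pi/2}"
      unfolding D_plus_def by auto
    have "sin (2 * Arg l) > 0"
    proof (cases "Arg l \<in> {0<..<pi/2}")
      case True then show ?thesis by (intro sin_gt_zero) auto
    next
      case False
      then have "Arg l \<in> {-pi<..<-pi/2}" using A by blast
      then have "sin (2 * Arg l + 2 * pi) > 0" by (intro sin_gt_zero) auto
      then show ?thesis by (simp add: sin_add)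
    qed
    then show ?thesis using nz by (simp add: Im_sq_Arg)
  next
    case 2 then show ?thesis by (auto simp: power2_eq_square)
  qed
qed

lemma Dminus_Im: "l \<in> D_minus \<union> Sigma_contour \<Longrightarrow> Im (l^2) \<le> 0"
proof -
  assume "l \<in> D_minus \<union> Sigma_contour"
  then consider "l \<in> D_minus" | "Im l = 0 \<or> Re l = 0" unfolding Sigma_contour_def by blast
  then show ?thesis
  proof cases
    case 1
    then have nz: "l \<noteq> 0" and A: "Arg l \<in> {pi/2<..<pi} \<or> Arg l \<in> {-pi/2<..<0}"
      unfolding D_minus_def by auto
    have "sin (2 * Arg l) < 0"
    proof (cases "Arg l \<in> {pi/2<..<pi}")
      case True
      then have "sin (2 * Arg l - pi) > 0" by (intro sin_gt_zero) auto
      then show ?thesis by (simp add: sin_diff)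
    next
      case False
      then have "Arg l \<in> {-pi/2<..<0}" using A by blast
      then have "sin (- (2 * Arg l)) > 0" by (intro sin_gt_zero) auto
      then show ?thesis by simp
    qed
    then show ?thesis using nz by (simp add: Im_sq_Arg mult_nonneg_nonpos)
  next
    case 2 then show ?thesis by (auto simp: power2_eq_square)
  qed
qed







lemma rd_facts:
  assumes "rapidly_decaying q"
  shows "\<And>x. (dv q has_vector_derivative dv (dv q) x) (at x)"
    and "\<exists>C. \<forall>x. norm (dv q x) \<le> C"
    and "\<exists>C. \<forall>x. norm (dv q x) \<le> C * inverse (1 + x^2)"
proof -
  have d: "\<And>k x. ((dv ^^ k) q) differentiable (at x)"
   and b: "\<And>k n. \<exists>C. \<forall>x::real. (1 + \<bar>x\<bar>) ^ n * norm ((dv ^^ k) q x) \<le> C"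
    using assms unfolding rapidly_decaying_def by auto
  show "(dv q has_vector_derivative dv (dv q) x) (at x)" for x
  proof -
    have "dv q differentiable at x" using d[of 1 x] by simp
    then show ?thesis unfolding dv_def[of "dv q"] using vector_derivative_works by blast
  qed
  show "\<exists>C. \<forall>x. norm (dv q x) \<le> C" using b[of 0 1] by simp
  obtain C where C: "\<And>x. (1 + \<bar>x\<bar>) ^ 2 * norm (dv q x) \<le> C" using b[of 2 1] by auto
  have "norm (dv q x) \<le> C * inverse (1 + x^2)" for x
  proof -
    have p: "0 < 1 + x^2" by (simp add: add_pos_nonneg)
    have "1 + x^2 \<le> (1 + \<bar>x\<bar>)^2" by (simp add: power2_eq_square algebra_simps)
    then have "(1 + x^2) * norm (dv q x) \<le> C"
      using C[of x] by (meson mult_right_mono norm_ge_zero order_trans)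
    then show ?thesis using p by (simp add: field_simps)
  qed
  then show "\<exists>C. \<forall>x. norm (dv q x) \<le> C * inverse (1 + x^2)" by blast
qed



lemma tail:
  fixes u v E :: "real \<Rightarrow> complex"
  assumes tu: "((\<lambda>y. u y * E y) \<longlongrightarrow> a) F" and tv: "((\<lambda>y. v y * E y) \<longlongrightarrow> b) F"
    and ab: "a * b = 0" and E: "eventually (\<lambda>y. norm (E y) \<ge> 1) F"
  shows "eventually (\<lambda>y. norm (u y) \<le> norm a + 1 \<and> norm (v y) \<le> norm b + 1) F"
    and "((\<lambda>y. u y * v y) \<longlongrightarrow> 0) F"
proof -
  have e1: "eventually (\<lambda>y. dist (u y * E y) a < 1) F" by (rule tendstoD[OF tu]) simp
  have e2: "eventually (\<lambda>y. dist (v y * E y) b < 1) F" by (rule tendstoD[OF tv]) simp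
  have k: "norm (w y) \<le> norm (w y * E y)" if "norm (E y) \<ge> 1" for w :: "real \<Rightarrow> complex" and y
    using mult_left_mono[OF that norm_ge_zero[of "w y"]] by (simp add: norm_mult)
  have k2: "norm (z) \<le> norm a + 1" if "dist z a < 1" for z
    using that norm_triangle_ineq2[of z a] by (simp add: dist_norm)
  have k3: "norm (z) \<le> norm b + 1" if "dist z b < 1" for z
    using that norm_triangle_ineq2[of z b] by (simp add: dist_norm)
  show "eventually (\<lambda>y. norm (u y) \<le> norm a + 1 \<and> norm (v y) \<le> norm b + 1) F"
    using e1 e2 E
  proof eventually_elim
    case (elim y)
    have "norm (u y) \<le> norm (u y * E y)" "norm (v y) \<le> norm (v y * E y)"
      using k[of y u] k[of y v] elim by auto
    moreover have "norm (u y * E y) \<le> norm a + 1" "norm (v y * E y) \<le> norm b + 1"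
      using k2 k3 elim by auto
    ultimately show ?case by linarith
  qed
  have lim: "((\<lambda>y. (u y * E y) * (v y * E y)) \<longlongrightarrow> 0) F"
    using tendsto_mult[OF tu tv] ab by simp
  show "((\<lambda>y. u y * v y) \<longlongrightarrow> 0) F"
  proof (rule Lim_null_comparison[OF _ tendsto_norm_zero[OF lim]])
    show "\<forall>\<^sub>F y in F. norm (u y * v y) \<le> norm (u y * E y * (v y * E y))"
      using E
    proof eventually_elim
      case (elim y)
      have "1 \<le> norm (E y) * norm (E y)" using elim mult_mono[of 1 "norm (E y)" 1 "norm (E y)"] by simp
      then have "norm (u y * v y) * 1 \<le> norm (u y * v y) * (norm (E y) * norm (E y))"
        by (intro mult_left_mono) auto
      then show ?case by (simp add: norm_mult mult_ac)
    qed
  qed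
qed



lemma bnd_bot:
  fixes u :: "real \<Rightarrow> complex"
  assumes c: "continuous_on UNIV u" and e: "eventually (\<lambda>y. norm (u y) \<le> K) at_bot"
  shows "\<exists>B. \<forall>y\<le>x. norm (u y) \<le> B"
proof -
  obtain a where a: "\<And>y. y \<le> a \<Longrightarrow> norm (u y) \<le> K" using e unfolding eventually_at_bot_linorder by blast
  have cpt: "compact (u ` {a..x})" by (rule compact_continuous_image[OF continuous_on_subset[OF c]]) auto
  then obtain M where M: "\<And>z. z \<in> u ` {a..x} \<Longrightarrow> norm z \<le> M"
    using compact_imp_bounded[OF cpt] unfolding bounded_iff by blast
  have "norm (u y) \<le> max K M" if "y \<le> x" for y
  proof (cases "y \<le> a")
    case True then show ?thesis using a[OF True] by simp
  next
    case False
    then have "u y \<in> u ` {a..x}" using that by auto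
    then have "norm (u y) \<le> M" using M by blast
    then show ?thesis by simp
  qed
  then show ?thesis by blast
qed



lemma bnd_top:
  fixes u :: "real \<Rightarrow> complex"
  assumes c: "continuous_on UNIV u" and e: "eventually (\<lambda>y. norm (u y) \<le> K) at_top"
  shows "\<exists>B. \<forall>y\<ge>x. norm (u y) \<le> B"
proof -
  obtain a where a: "\<And>y. y \<ge> a \<Longrightarrow> norm (u y) \<le> K" using e unfolding eventually_at_top_linorder by blast
  have cpt: "compact (u ` {x..a})" by (rule compact_continuous_image[OF continuous_on_subset[OF c]]) auto
  then obtain M where M: "\<And>z. z \<in> u ` {x..a} \<Longrightarrow> norm z \<le> M"
    using compact_imp_bounded[OF cpt] unfolding bounded_iff by blast
  have "norm (u y) \<le> max K M" if "y \<ge> x" for y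
  proof (cases "y \<ge> a")
    case True then show ?thesis using a[OF True] by simp
  next
    case False
    then have "u y \<in> u ` {x..a}" using that by auto
    then have "norm (u y) \<le> M" using M by blast
    then show ?thesis by simp
  qed
  then show ?thesis by blast
qed




lemma nb:
  fixes a b1 b2 c x1 x2 :: complex
  assumes "norm a \<le> B" "norm b1 \<le> B" "norm b2 \<le> B" "norm c \<le> Cq"
  shows "norm (2 * a * (x1 * b1 + x2 * c * b2)) \<le> 2 * B * (norm x1 * B + norm x2 * Cq * B)"
proof -
  have B: "B \<ge> 0" using assms(1) norm_ge_zero order_trans by blast
  have Cq: "Cq \<ge> 0" using assms(4) norm_ge_zero order_trans by blast
  have "norm (x1 * b1 + x2 * c * b2) \<le> norm x1 * norm b1 + norm x2 * norm c * norm b2"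
    using norm_triangle_ineq[of "x1*b1" "x2*c*b2"] by (simp add: norm_mult)
  also have "\<dots> \<le> norm x1 * B + norm x2 * Cq * B"
    using assms Cq by (intro add_mono mult_mono mult_left_mono) auto
  finally have s: "norm (x1 * b1 + x2 * c * b2) \<le> norm x1 * B + norm x2 * Cq * B" .
  have "norm (2 * a * (x1 * b1 + x2 * c * b2)) = 2 * norm a * norm (x1 * b1 + x2 * c * b2)"
    by (simp add: norm_mult)
  also have "\<dots> \<le> 2 * B * (norm x1 * B + norm x2 * Cq * B)"
    using assms(1) s B by (intro mult_mono) auto
  finally show ?thesis .
qed



lemma common:
  fixes q u v :: "real \<Rightarrow> complex" and l :: complex
  assumes rd: "rapidly_decaying q" and lax: "lax_sol q l u v"
  defines "qh \<equiv> dv q" and "rh \<equiv> (\<lambda>x. cnj (dv q x))" and "qd \<equiv> dv (dv q)"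
    and "du \<equiv> (\<lambda>x. - \<i> * l^2 * u x + l * dv q x * v x)"
    and "dw \<equiv> (\<lambda>x. l * cnj (dv q x) * u x + \<i> * l^2 * v x)"
  shows "\<And>x. (u has_vector_derivative du x) (at x)" "\<And>x. (v has_vector_derivative dw x) (at x)"
    "\<And>x. (qh has_vector_derivative qd x) (at x)" "\<And>x. (rh has_vector_derivative cnj (qd x)) (at x)"
    "\<And>x. dv qh x = qd x" "\<And>x. dv rh x = cnj (qd x)"
    "dv (\<lambda>x. (u x)^2) = (\<lambda>x. 2 * u x * du x)" "dv (\<lambda>x. (v x)^2) = (\<lambda>x. 2 * v x * dw x)"
    "continuous_on UNIV u" "continuous_on UNIV v" "continuous_on UNIV qh" "continuous_on UNIV rh"
    "\<And>x. norm (rh x) = norm (qh x)"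
proof -
  show hu: "(u has_vector_derivative du x) (at x)" and hv: "(v has_vector_derivative dw x) (at x)" for x
    using lax unfolding lax_sol_def du_def dw_def qh_def rh_def by auto
  show hq: "(qh has_vector_derivative qd x) (at x)" for x
    using rd_facts(1)[OF rd] unfolding qh_def qd_def by blast
  show hr: "(rh has_vector_derivative cnj (qd x)) (at x)" for x
    unfolding rh_def using has_vector_derivative_cnj[OF hq[unfolded qh_def]] by blast
  show "dv qh x = qd x" for x unfolding dv_def using hq vector_derivative_at by blast
  show "dv rh x = cnj (qd x)" for x unfolding dv_def using hr vector_derivative_at by blast
  show "dv (\<lambda>x. (u x)^2) = (\<lambda>x. 2 * u x * du x)"
  proof
    fix x
    have "((\<lambda>x. u x * u x) has_vector_derivative (u x * du x + du x * u x)) (at x)"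
      by (rule has_vector_derivative_mult[OF hu hu])
    then have "((\<lambda>x. (u x)^2) has_vector_derivative (2 * u x * du x)) (at x)"
      by (simp add: power2_eq_square algebra_simps)
    then show "dv (\<lambda>x. (u x)^2) x = 2 * u x * du x" unfolding dv_def by (rule vector_derivative_at)
  qed
  show "dv (\<lambda>x. (v x)^2) = (\<lambda>x. 2 * v x * dw x)"
  proof
    fix x
    have "((\<lambda>x. v x * v x) has_vector_derivative (v x * dw x + dw x * v x)) (at x)"
      by (rule has_vector_derivative_mult[OF hv hv])
    then have "((\<lambda>x. (v x)^2) has_vector_derivative (2 * v x * dw x)) (at x)"
      by (simp add: power2_eq_square algebra_simps)
    then show "dv (\<lambda>x. (v x)^2) x = 2 * v x * dw x" unfolding dv_def by (rule vector_derivative_at)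
  qed
  show "continuous_on UNIV u" by (rule continuous_on_vector_derivative) (use hu has_vector_derivative_at_within in blast)
  show "continuous_on UNIV v" by (rule continuous_on_vector_derivative) (use hv has_vector_derivative_at_within in blast)
  show "continuous_on UNIV qh" by (rule continuous_on_vector_derivative) (use hq has_vector_derivative_at_within in blast)
  show "continuous_on UNIV rh" by (rule continuous_on_vector_derivative) (use hr has_vector_derivative_at_within in blast)
  show "norm (rh x) = norm (qh x)" for x by (simp add: rh_def qh_def)
qed





lemma dprod:
  fixes u v qh :: "real \<Rightarrow> complex"
  assumes hu: "(u has_vector_derivative a) (at x)" and hv: "(v has_vector_derivative b) (at x)"
    and hq: "(qh has_vector_derivative c) (at x)"
  shows "((\<lambda>x. 2 * u x * (k * u x + l * (qh x * v x))) has_vector_derivative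
     (2*a*(k*u x + l*(qh x * v x)) + 2*u x*(k*a + l*(c * v x + qh x * b)))) (at x)"
proof -
  have m1: "((\<lambda>x. 2 * u x) has_vector_derivative 2*a) (at x)" using has_vector_derivative_mult_right[OF hu] .
  have m2: "((\<lambda>x. qh x * v x) has_vector_derivative (qh x * b + c * v x)) (at x)"
    using has_vector_derivative_mult[OF hq hv] .
  have m3: "((\<lambda>x. k * u x + l * (qh x * v x)) has_vector_derivative (k*a + l*(qh x * b + c * v x))) (at x)"
    using has_vector_derivative_add[OF has_vector_derivative_mult_right[OF hu] has_vector_derivative_mult_right[OF m2]] .
  show ?thesis using has_vector_derivative_mult[OF m1 m3] by (simp add: algebra_simps)
qed



lemma dprod2:
  fixes u v rh :: "real \<Rightarrow> complex"
  assumes hu: "(u has_vector_derivative a) (at x)" and hv: "(v has_vector_derivative b) (at x)"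
    and hr: "(rh has_vector_derivative c) (at x)"
  shows "((\<lambda>x. - (2 * v x * (l * (rh x * u x) + k * v x))) has_vector_derivative
     - (2*b*(l * (rh x * u x) + k * v x) + 2 * v x * (l * (rh x * a + c * u x) + k * b))) (at x)"
proof -
  have m1: "((\<lambda>x. 2 * v x) has_vector_derivative 2*b) (at x)" using has_vector_derivative_mult_right[OF hv] .
  have m2: "((\<lambda>x. rh x * u x) has_vector_derivative (rh x * a + c * u x)) (at x)"
    using has_vector_derivative_mult[OF hr hu] .
  have m3: "((\<lambda>x. l * (rh x * u x) + k * v x) has_vector_derivative (l * (rh x * a + c * u x) + k * b)) (at x)"
    using has_vector_derivative_add[OF has_vector_derivative_mult_right[OF m2] has_vector_derivative_mult_right[OF hv]] .
  show ?thesis using has_vector_derivative_minus[OF has_vector_derivative_mult[OF m1 m3]] by (simp add: algebra_simps)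
qed






lemma Lt_main:
  fixes q u v :: "real \<Rightarrow> complex" and l :: complex
  assumes rd: "rapidly_decaying q" and lax: "lax_sol q l u v"
    and bu: "eventually (\<lambda>y. norm (u y) \<le> K) at_top" and bv: "eventually (\<lambda>y. norm (v y) \<le> K') at_top"
    and lim: "((\<lambda>y. u y * v y) \<longlongrightarrow> 0) at_top"
  shows "let w1 = dv (\<lambda>x. (v x)^2); w2 = dv (\<lambda>x. (u x)^2) in
        Lt_defined (dv q) (\<lambda>x. cnj (dv q x)) w1 w2 \<and>
        (\<forall>x. Lt_op (dv q) (\<lambda>x. cnj (dv q x)) w1 w2 x = (- (l^2 * w1 x), - (l^2 * w2 x)))"
proof -
  define qh where "qh = dv q"
  define rh where "rh = (\<lambda>x. cnj (dv q x))"
  define qd where "qd = dv (dv q)"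
  define du where "du = (\<lambda>x. - \<i> * l^2 * u x + l * dv q x * v x)"
  define dw where "dw = (\<lambda>x. l * cnj (dv q x) * u x + \<i> * l^2 * v x)"
  note c = common[OF rd lax, folded qh_def rh_def qd_def du_def dw_def]
  have hu: "(u has_vector_derivative du x) (at x)" for x using c(1)[of x] by (simp add: du_def qh_def)
  have hv: "(v has_vector_derivative dw x) (at x)" for x using c(2)[of x] by (simp add: dw_def rh_def qh_def)
  have du': "du x = - \<i> * l^2 * u x + l * qh x * v x" for x by (simp add: du_def qh_def)
  have dw': "dw x = l * rh x * u x + \<i> * l^2 * v x" for x by (simp add: dw_def rh_def)
  obtain Cq where Cq: "\<And>x. norm (qh x) \<le> Cq" using rd_facts(2)[OF rd] unfolding qh_def by blast
  obtain Cd where Cd: "\<And>x. norm (qh x) \<le> Cd * inverse (1 + x^2)" using rd_facts(3)[OF rd] unfolding qh_def by blast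
  have Cr0: "\<And>y. norm (rh y) \<le> Cq" using Cq by (simp add: rh_def qh_def)
  have Cr: "norm (rh y) \<le> Cd * inverse (1 + y^2)" for y using Cd by (simp add: rh_def qh_def)
  define W1 where "W1 = (\<lambda>x. 2 * v x * dw x)"
  define W2 where "W2 = (\<lambda>x. 2 * u x * du x)"
  define D1 where "D1 = (\<lambda>x. 2*dw x*dw x + 2* v x*(l*(cnj (qd x)*u x + rh x*du x) + \<i> * l^2 * dw x))"
  define D2 where "D2 = (\<lambda>x. 2*du x*du x + 2*u x*(- \<i> * l^2 * du x + l*(qd x * v x + qh x * dw x)))"
  have w1e: "dv (\<lambda>x. (v x)^2) = W1" using c(8) by (simp add: W1_def dw_def rh_def qh_def)
  have w2e: "dv (\<lambda>x. (u x)^2) = W2" using c(7) by (simp add: W2_def du_def qh_def)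
  have dW2: "(W2 has_vector_derivative D2 x) (at x)" for x
  proof -
    have "W2 = (\<lambda>x. 2 * u x * (- \<i> * l^2 * u x + l * (qh x * v x)))"
      by (simp add: W2_def du' fun_eq_iff mult_ac)
    moreover have "((\<lambda>x. 2 * u x * (- \<i> * l^2 * u x + l * (qh x * v x))) has_vector_derivative D2 x) (at x)"
      by (rule has_vector_derivative_eq_rhs[OF dprod[OF hu hv c(3)]]) (simp add: D2_def du_def dw_def qh_def algebra_simps power2_eq_square)
    ultimately show ?thesis by simp
  qed
  have dW1: "(W1 has_vector_derivative D1 x) (at x)" for x
  proof -
    have "W1 = (\<lambda>x. - (- (2 * v x * (l * (rh x * u x) + \<i> * l^2 * v x))))"
      by (simp add: W1_def dw' fun_eq_iff mult_ac)
    moreover have "((\<lambda>x. - (- (2 * v x * (l * (rh x * u x) + \<i> * l^2 * v x)))) has_vector_derivative D1 x) (at x)"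
      by (rule has_vector_derivative_eq_rhs[OF has_vector_derivative_minus[OF dprod2[OF hu hv c(4)]]])
         (simp add: D1_def du_def dw_def qh_def rh_def algebra_simps power2_eq_square)
    ultimately show ?thesis by simp
  qed
  have cW1: "continuous_on UNIV W1" by (rule continuous_on_vector_derivative) (use dW1 has_vector_derivative_at_within in blast)
  have cW2: "continuous_on UNIV W2" by (rule continuous_on_vector_derivative) (use dW2 has_vector_derivative_at_within in blast)
  have AI: "(\<lambda>y. qh y * W1 y) absolutely_integrable_on {z..} \<and> (\<lambda>y. rh y * W2 y) absolutely_integrable_on {z..}" for z
  proof -
    obtain B1 where B1: "\<And>y. y \<ge> z \<Longrightarrow> norm (u y) \<le> B1" using bnd_top[OF c(9) bu] by blast
    obtain B2 where B2: "\<And>y. y \<ge> z \<Longrightarrow> norm (v y) \<le> B2" using bnd_top[OF c(10) bv] by blast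
    define B where "B = max B1 B2"
    have Bu: "norm (u y) \<le> B" and Bv: "norm (v y) \<le> B" if "y \<ge> z" for y
      using B1[OF that] B2[OF that] by (auto simp: B_def)
    have bW2: "norm (W2 y) \<le> 2 * B * (norm (- \<i> * l^2) * B + norm l * Cq * B)" if "y \<in> {z..}" for y
    proof -
      have "norm (W2 y) = norm (2 * u y * ((- \<i> * l^2) * u y + l * qh y * v y))" by (simp add: W2_def du')
      also have "\<dots> \<le> 2 * B * (norm (- \<i> * l^2) * B + norm l * Cq * B)"
        by (rule nb) (use Bu Bv Cq that in auto)
      finally show ?thesis .
    qed
    have bW1: "norm (W1 y) \<le> 2 * B * (norm (\<i> * l^2) * B + norm l * Cq * B)" if "y \<in> {z..}" for y
    proof -
      have "norm (W1 y) = norm (2 * v y * (\<i> * l^2 * v y + l * rh y * u y))"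
        by (simp add: W1_def dw' add.commute)
      also have "\<dots> \<le> 2 * B * (norm (\<i> * l^2) * B + norm l * Cq * B)"
        by (rule nb) (use Bu Bv Cq Cr0 that in auto)
      finally show ?thesis .
    qed
    have A1: "(\<lambda>y. qh y * W1 y) absolutely_integrable_on {z..}"
      by (rule int_bound_gen[OF c(11) cW1 Cd bW1]) auto
    have A2: "(\<lambda>y. rh y * W2 y) absolutely_integrable_on {z..}"
      by (rule int_bound_gen[OF c(12) cW2 Cr bW2]) auto
    show ?thesis using A1 A2 by blast
  qed
  have LD: "Lt_defined qh rh W1 W2" unfolding Lt_defined_def
    using AI absolutely_integrable_on_def by blast
  have Lx: "Lt_op qh rh W1 W2 x = (- (l^2 * W1 x), - (l^2 * W2 x))" for x
  proof -
    have A1: "(\<lambda>y. qh y * W1 y) absolutely_integrable_on {x..}" and A2: "(\<lambda>y. rh y * W2 y) absolutely_integrable_on {x..}"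
      using AI by blast+
    have I1: "(\<lambda>y. qh y * W1 y) integrable_on {x..}" using A1 absolutely_integrable_on_def by blast
    have I2: "(\<lambda>y. rh y * W2 y) integrable_on {x..}" using A2 absolutely_integrable_on_def by blast
    define G where "G = (\<lambda>y. 2*\<i>*l*(u y * v y))"
    have dG: "(G has_vector_derivative (qh y * W1 y - rh y * W2 y)) (at y)" for y
    proof -
      have "((\<lambda>y. u y * v y) has_vector_derivative (u y * dw y + du y * v y)) (at y)"
        by (rule has_vector_derivative_mult[OF hu hv])
      from has_vector_derivative_mult_right[OF this, of "2*\<i>*l"]
      show ?thesis unfolding G_def
        by (rule has_vector_derivative_eq_rhs) (simp add: W1_def W2_def du' dw' algebra_simps power2_eq_square)
    qed
    have prim: "((\<lambda>y. qh y * W1 y - rh y * W2 y) has_integral (G b - G x)) {x..b}" if "x \<le> b" for b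
      by (rule fundamental_theorem_of_calculus[OF that]) (use dG has_vector_derivative_at_within in blast)
    have limG: "(G \<longlongrightarrow> 0) at_top"
      unfolding G_def using tendsto_mult[OF tendsto_const[of "2*\<i>*l"] lim] by simp
    have "integral {x..} (\<lambda>y. qh y * W1 y - rh y * W2 y) = - G x"
      by (rule int_prim_top[OF set_integral_diff(1)[OF A1 A2] prim limG])
    then have Isum: "integral {x..} (\<lambda>y. qh y * W1 y) - integral {x..} (\<lambda>y. rh y * W2 y) = -2*\<i>*l*u x * v x"
      using integral_diff[OF I1 I2] by (simp add: G_def mult.assoc)
    have dv1: "dv W1 x = D1 x" unfolding dv_def using dW1 vector_derivative_at by blast
    have dv2: "dv W2 x = D2 x" unfolding dv_def using dW2 vector_derivative_at by blast
    have e1: "- (1/2) * (- \<i> * D1 x - cnj (qd x) * integral {x..} (\<lambda>y. qh y * W1 y) + qh x * rh x * W1 x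
          + cnj (qd x) * integral {x..} (\<lambda>y. rh y * W2 y) - (rh x)^2 * W2 x) = - (l^2 * W1 x)"
      by (rule alg_Lt(1)[OF Isum du'[of x] dw'[of x] W1_def[THEN fun_cong, of x] W2_def[THEN fun_cong, of x] D1_def[THEN fun_cong, of x] D2_def[THEN fun_cong, of x]])
    have e2: "- (1/2) * (qd x * integral {x..} (\<lambda>y. qh y * W1 y) - (qh x)^2 * W1 x + \<i> * D2 x
          - qd x * integral {x..} (\<lambda>y. rh y * W2 y) + qh x * rh x * W2 x) = - (l^2 * W2 x)"
      by (rule alg_Lt(2)[OF Isum du'[of x] dw'[of x] W1_def[THEN fun_cong, of x] W2_def[THEN fun_cong, of x] D1_def[THEN fun_cong, of x] D2_def[THEN fun_cong, of x]])
    have dq5: "dv qh x = qd x" by (simp add: qh_def qd_def)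
    have dr6: "dv rh x = cnj (qd x)" using c(6)[of x] by (simp add: qd_def qh_def rh_def)
    show ?thesis
      unfolding Lt_op_def Let_def dv1 dv2 dq5 dr6 by (simp only: e1 e2)
  qed
  show ?thesis unfolding Let_def w1e w2e using LD Lx by (simp add: qh_def rh_def)
qed





lemma Re_E: "Re (\<i> * l^2 * of_real y) = - (Im (l^2) * y)" "Re (- \<i> * l^2 * of_real y) = Im (l^2) * y"
  by simp_all

lemma E_bot1: "Im (l^2) \<ge> 0 \<Longrightarrow> eventually (\<lambda>y::real. norm (exp (\<i> * l^2 * of_real y)) \<ge> 1) at_bot"
  unfolding eventually_at_bot_linorder
  by (rule exI[of _ 0]) (simp only: norm_exp_eq_Re Re_E one_le_exp_iff, simp add: mult_nonneg_nonpos)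

lemma E_bot2: "Im (l^2) \<le> 0 \<Longrightarrow> eventually (\<lambda>y::real. norm (exp (- \<i> * l^2 * of_real y)) \<ge> 1) at_bot"
  unfolding eventually_at_bot_linorder
  by (rule exI[of _ 0]) (simp only: norm_exp_eq_Re Re_E one_le_exp_iff, simp add: mult_nonpos_nonpos)

lemma E_top1: "Im (l^2) \<le> 0 \<Longrightarrow> eventually (\<lambda>y::real. norm (exp (\<i> * l^2 * of_real y)) \<ge> 1) at_top"
  unfolding eventually_at_top_linorder
  by (rule exI[of _ 0]) (simp only: norm_exp_eq_Re Re_E one_le_exp_iff, simp add: mult_nonpos_nonneg)

lemma E_top2: "Im (l^2) \<ge> 0 \<Longrightarrow> eventually (\<lambda>y::real. norm (exp (- \<i> * l^2 * of_real y)) \<ge> 1) at_top"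
  unfolding eventually_at_top_linorder
  by (rule exI[of _ 0]) (simp only: norm_exp_eq_Re Re_E one_le_exp_iff, simp)

lemma tail2:
  fixes u v E :: "real \<Rightarrow> complex"
  assumes tu: "((\<lambda>y. u y * E y) \<longlongrightarrow> a) F" and tv: "((\<lambda>y. v y * E y) \<longlongrightarrow> b) F"
    and ab: "a * b = 0" and E: "eventually (\<lambda>y. norm (E y) \<ge> 1) F"
  shows "eventually (\<lambda>y. norm (u y) \<le> norm a + 1) F" "eventually (\<lambda>y. norm (v y) \<le> norm b + 1) F"
    and "((\<lambda>y. u y * v y) \<longlongrightarrow> 0) F"
proof -
  note t = tail[OF tu tv ab E]
  show "eventually (\<lambda>y. norm (u y) \<le> norm a + 1) F" by (rule eventually_mono[OF t(1)]) simp
  show "eventually (\<lambda>y. norm (v y) \<le> norm b + 1) F" by (rule eventually_mono[OF t(1)]) simp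
  show "((\<lambda>y. u y * v y) \<longlongrightarrow> 0) F" by (rule t(2))
qed




lemma L_main:
  fixes q u v :: "real \<Rightarrow> complex" and l :: complex
  assumes rd: "rapidly_decaying q" and lax: "lax_sol q l u v"
    and bu: "eventually (\<lambda>y. norm (u y) \<le> K) at_bot" and bv: "eventually (\<lambda>y. norm (v y) \<le> K') at_bot"
    and lim: "((\<lambda>y. u y * v y) \<longlongrightarrow> 0) at_bot"
  shows "let w1 = dv (\<lambda>x. (u x)^2); w2 = (\<lambda>x. - dv (\<lambda>x. (v x)^2) x) in
        L_defined (dv q) (\<lambda>x. cnj (dv q x)) w1 w2 \<and>
        (\<forall>x. L_op (dv q) (\<lambda>x. cnj (dv q x)) w1 w2 x = (- (l^2 * w1 x), - (l^2 * w2 x)))"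
proof -
  define qh where "qh = dv q"
  define rh where "rh = (\<lambda>x. cnj (dv q x))"
  define qd where "qd = dv (dv q)"
  define du where "du = (\<lambda>x. - \<i> * l^2 * u x + l * dv q x * v x)"
  define dw where "dw = (\<lambda>x. l * cnj (dv q x) * u x + \<i> * l^2 * v x)"
  note c = common[OF rd lax, folded qh_def rh_def qd_def du_def dw_def]
  have hu: "(u has_vector_derivative du x) (at x)" for x using c(1)[of x] by (simp add: du_def qh_def)
  have hv: "(v has_vector_derivative dw x) (at x)" for x using c(2)[of x] by (simp add: dw_def rh_def qh_def)
  have du': "du x = - \<i> * l^2 * u x + l * qh x * v x" for x by (simp add: du_def qh_def)
  have dw': "dw x = l * rh x * u x + \<i> * l^2 * v x" for x by (simp add: dw_def rh_def)
  obtain Cq where Cq: "\<And>x. norm (qh x) \<le> Cq" using rd_facts(2)[OF rd] unfolding qh_def by blast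
  obtain Cd where Cd: "\<And>x. norm (qh x) \<le> Cd * inverse (1 + x^2)" using rd_facts(3)[OF rd] unfolding qh_def by blast
  have Cr0: "\<And>y. norm (rh y) \<le> Cq" using Cq by (simp add: rh_def qh_def)
  define W1 where "W1 = (\<lambda>x. 2 * u x * du x)"
  define W2 where "W2 = (\<lambda>x. - (2 * v x * dw x))"
  define D1 where "D1 = (\<lambda>x. 2*du x*du x + 2*u x*(- \<i> * l^2 * du x + l*(qd x * v x + qh x * dw x)))"
  define D2 where "D2 = (\<lambda>x. - (2*dw x*dw x + 2* v x*(l*(cnj (qd x)*u x + rh x*du x) + \<i> * l^2 * dw x)))"
  have w1e: "dv (\<lambda>x. (u x)^2) = W1" using c(7) by (simp add: W1_def du_def qh_def)
  have w2e: "(\<lambda>x. - dv (\<lambda>x. (v x)^2) x) = W2" using c(8) by (simp add: W2_def dw_def rh_def qh_def)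
  have dW1: "(W1 has_vector_derivative D1 x) (at x)" for x
  proof -
    have "W1 = (\<lambda>x. 2 * u x * (- \<i> * l^2 * u x + l * (qh x * v x)))"
      by (simp add: W1_def du' fun_eq_iff mult_ac)
    moreover have "((\<lambda>x. 2 * u x * (- \<i> * l^2 * u x + l * (qh x * v x))) has_vector_derivative D1 x) (at x)"
      by (rule has_vector_derivative_eq_rhs[OF dprod[OF hu hv c(3)]]) (simp add: D1_def du_def dw_def qh_def algebra_simps power2_eq_square)
    ultimately show ?thesis by simp
  qed
  have dW2: "(W2 has_vector_derivative D2 x) (at x)" for x
  proof -
    have "W2 = (\<lambda>x. - (2 * v x * (l * (rh x * u x) + \<i> * l^2 * v x)))"
      by (simp add: W2_def dw' fun_eq_iff mult_ac)
    moreover have "((\<lambda>x. - (2 * v x * (l * (rh x * u x) + \<i> * l^2 * v x))) has_vector_derivative D2 x) (at x)"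
      by (rule has_vector_derivative_eq_rhs[OF dprod2[OF hu hv c(4)]]) (simp add: D2_def du_def dw_def qh_def rh_def algebra_simps power2_eq_square)
    ultimately show ?thesis by simp
  qed
  have cW1: "continuous_on UNIV W1" by (rule continuous_on_vector_derivative) (use dW1 has_vector_derivative_at_within in blast)
  have cW2: "continuous_on UNIV W2" by (rule continuous_on_vector_derivative) (use dW2 has_vector_derivative_at_within in blast)
  have Lx: "L_defined qh rh W1 W2 \<and> L_op qh rh W1 W2 x = (- (l^2 * W1 x), - (l^2 * W2 x))" for x
  proof -
    obtain B1 where B1: "\<And>y. y \<le> x \<Longrightarrow> norm (u y) \<le> B1" using bnd_bot[OF c(9) bu] by blast
    obtain B2 where B2: "\<And>y. y \<le> x \<Longrightarrow> norm (v y) \<le> B2" using bnd_bot[OF c(10) bv] by blast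
    define B where "B = max B1 B2"
    have Bu: "norm (u y) \<le> B" and Bv: "norm (v y) \<le> B" if "y \<le> x" for y
      using B1[OF that] B2[OF that] by (auto simp: B_def)
    have bW1: "norm (W1 y) \<le> 2 * B * (norm (- \<i> * l^2) * B + norm l * Cq * B)" if "y \<in> {..x}" for y
    proof -
      have "norm (W1 y) = norm (2 * u y * ((- \<i> * l^2) * u y + l * qh y * v y))" by (simp add: W1_def du')
      also have "\<dots> \<le> 2 * B * (norm (- \<i> * l^2) * B + norm l * Cq * B)"
        by (rule nb) (use Bu Bv Cq that in auto)
      finally show ?thesis .
    qed
    have bW2: "norm (W2 y) \<le> 2 * B * (norm (\<i> * l^2) * B + norm l * Cq * B)" if "y \<in> {..x}" for y
    proof -
      have "norm (W2 y) = norm (2 * v y * (\<i> * l^2 * v y + l * rh y * u y))"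
        by (simp add: W2_def dw' add.commute)
      also have "\<dots> \<le> 2 * B * (norm (\<i> * l^2) * B + norm l * Cq * B)"
        by (rule nb) (use Bu Bv Cq Cr0 that in auto)
      finally show ?thesis .
    qed
    have Cr: "norm (rh y) \<le> Cd * inverse (1 + y^2)" for y using Cd by (simp add: rh_def qh_def)
    have A1: "(\<lambda>y. rh y * W1 y) absolutely_integrable_on {..x}"
      by (rule int_bound_gen[OF c(12) cW1 Cr bW1]) auto
    have A2: "(\<lambda>y. qh y * W2 y) absolutely_integrable_on {..x}"
      by (rule int_bound_gen[OF c(11) cW2 Cd bW2]) auto
    have I1: "(\<lambda>y. rh y * W1 y) integrable_on {..x}" using A1 absolutely_integrable_on_def by blast
    have I2: "(\<lambda>y. qh y * W2 y) integrable_on {..x}" using A2 absolutely_integrable_on_def by blast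
    define G where "G = (\<lambda>y. -2*\<i>*l*(u y * v y))"
    have dG: "(G has_vector_derivative (rh y * W1 y + qh y * W2 y)) (at y)" for y
    proof -
      have "((\<lambda>y. u y * v y) has_vector_derivative (u y * dw y + du y * v y)) (at y)"
        by (rule has_vector_derivative_mult[OF hu hv])
      from has_vector_derivative_mult_right[OF this, of "-2*\<i>*l"]
      show ?thesis unfolding G_def
        by (rule has_vector_derivative_eq_rhs) (simp add: W1_def W2_def du' dw' algebra_simps power2_eq_square)
    qed
    have prim: "((\<lambda>y. rh y * W1 y + qh y * W2 y) has_integral (G x - G a)) {a..x}" if "a \<le> x" for a
      by (rule fundamental_theorem_of_calculus[OF that]) (use dG has_vector_derivative_at_within in blast)
    have limG: "(G \<longlongrightarrow> 0) at_bot"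
      unfolding G_def using tendsto_mult[OF tendsto_const[of "-2*\<i>*l"] lim] by simp
    have "integral {..x} (\<lambda>y. rh y * W1 y + qh y * W2 y) = G x"
      by (rule int_prim_bot[OF set_integral_add(1)[OF A1 A2] prim limG])
    then have Isum: "integral {..x} (\<lambda>y. rh y * W1 y) + integral {..x} (\<lambda>y. qh y * W2 y) = -2*\<i>*l*u x * v x"
      using integral_add[OF I1 I2] by (simp add: G_def mult.assoc)
    have LD: "L_defined qh rh W1 W2" unfolding L_defined_def
    proof
      fix z
      obtain B1 where B1: "\<And>y. y \<le> z \<Longrightarrow> norm (u y) \<le> B1" using bnd_bot[OF c(9) bu] by blast
      obtain B2 where B2: "\<And>y. y \<le> z \<Longrightarrow> norm (v y) \<le> B2" using bnd_bot[OF c(10) bv] by blast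
      define B where "B = max B1 B2"
      have Bu: "norm (u y) \<le> B" and Bv: "norm (v y) \<le> B" if "y \<le> z" for y
        using B1[OF that] B2[OF that] by (auto simp: B_def)
      have bW1: "norm (W1 y) \<le> 2 * B * (norm (- \<i> * l^2) * B + norm l * Cq * B)" if "y \<in> {..z}" for y
    proof -
      have "norm (W1 y) = norm (2 * u y * ((- \<i> * l^2) * u y + l * qh y * v y))" by (simp add: W1_def du')
      also have "\<dots> \<le> 2 * B * (norm (- \<i> * l^2) * B + norm l * Cq * B)"
        by (rule nb) (use Bu Bv Cq that in auto)
      finally show ?thesis .
    qed
      have bW2: "norm (W2 y) \<le> 2 * B * (norm (\<i> * l^2) * B + norm l * Cq * B)" if "y \<in> {..z}" for y
      proof -
        have "norm (W2 y) = norm (2 * v y * (\<i> * l^2 * v y + l * rh y * u y))"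
          by (simp add: W2_def dw' add.commute)
        also have "\<dots> \<le> 2 * B * (norm (\<i> * l^2) * B + norm l * Cq * B)"
          by (rule nb) (use Bu Bv Cq Cr0 that in auto)
        finally show ?thesis .
      qed
      have A1: "(\<lambda>y. rh y * W1 y) absolutely_integrable_on {..z}"
        by (rule int_bound_gen[OF c(12) cW1 Cr bW1]) auto
      have A2: "(\<lambda>y. qh y * W2 y) absolutely_integrable_on {..z}"
        by (rule int_bound_gen[OF c(11) cW2 Cd bW2]) auto
      show "(\<lambda>y. rh y * W1 y) integrable_on {..z} \<and> (\<lambda>y. qh y * W2 y) integrable_on {..z}"
        using A1 A2 absolutely_integrable_on_def by blast
    qed
    have dv1: "dv W1 x = D1 x" unfolding dv_def using dW1 vector_derivative_at by blast
    have dv2: "dv W2 x = D2 x" unfolding dv_def using dW2 vector_derivative_at by blast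
    have e1: "- (1/2) * (\<i> * D1 x + qd x * integral {..x} (\<lambda>y. rh y * W1 y) + qh x * rh x * W1 x
          + qd x * integral {..x} (\<lambda>y. qh y * W2 y) + (qh x)^2 * W2 x) = - (l^2 * W1 x)"
      by (rule alg_L(1)[OF Isum du'[of x] dw'[of x] W1_def[THEN fun_cong, of x] W2_def[THEN fun_cong, of x] D1_def[THEN fun_cong, of x] D2_def[THEN fun_cong, of x]])
    have e2: "- (1/2) * (cnj (qd x) * integral {..x} (\<lambda>y. rh y * W1 y) + (rh x)^2 * W1 x - \<i> * D2 x
          + cnj (qd x) * integral {..x} (\<lambda>y. qh y * W2 y) + qh x * rh x * W2 x) = - (l^2 * W2 x)"
      by (rule alg_L(2)[OF Isum du'[of x] dw'[of x] W1_def[THEN fun_cong, of x] W2_def[THEN fun_cong, of x] D1_def[THEN fun_cong, of x] D2_def[THEN fun_cong, of x]])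
    have dq5: "dv qh x = qd x" by (simp add: qh_def qd_def)
    have dr6: "dv rh x = cnj (qd x)" using c(6)[of x] by (simp add: qd_def qh_def rh_def)
    have "L_op qh rh W1 W2 x = (- (l^2 * W1 x), - (l^2 * W2 x))"
      unfolding L_op_def Let_def dv1 dv2 dq5 dr6 by (simp only: e1 e2)
    then show ?thesis using LD by blast
  qed
  show ?thesis unfolding Let_def w1e w2e using Lx by (simp add: qh_def rh_def)
qed



theorem mainTheorem5:
  fixes q :: "real \<Rightarrow> complex"
  assumes "rapidly_decaying q"
  defines "qh \<equiv> dv q" and "rh \<equiv> (\<lambda>x. cnj (dv q x))"
  shows
   "(\<forall>l \<in> D_plus \<union> Sigma_contour. \<forall>v1 v2. jost_minus_1 q l v1 v2 \<longrightarrow>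
      (let w1 = dv (\<lambda>x. (v1 x)^2); w2 = (\<lambda>x. - dv (\<lambda>x. (v2 x)^2) x) in
        L_defined qh rh w1 w2 \<and> (\<forall>x. L_op qh rh w1 w2 x = (- (l^2 * w1 x), - (l^2 * w2 x))))) \<and>
    (\<forall>l \<in> D_minus \<union> Sigma_contour. \<forall>v1 v2. jost_minus_2 q l v1 v2 \<longrightarrow>
      (let w1 = dv (\<lambda>x. (v1 x)^2); w2 = (\<lambda>x. - dv (\<lambda>x. (v2 x)^2) x) in
        L_defined qh rh w1 w2 \<and> (\<forall>x. L_op qh rh w1 w2 x = (- (l^2 * w1 x), - (l^2 * w2 x))))) \<and>
    (\<forall>l \<in> D_minus \<union> Sigma_contour. \<forall>v1 v2. jost_plus_1 q l v1 v2 \<longrightarrow>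
      (let w1 = dv (\<lambda>x. (v2 x)^2); w2 = dv (\<lambda>x. (v1 x)^2) in
        Lt_defined qh rh w1 w2 \<and> (\<forall>x. Lt_op qh rh w1 w2 x = (- (l^2 * w1 x), - (l^2 * w2 x))))) \<and>
    (\<forall>l \<in> D_plus \<union> Sigma_contour. \<forall>v1 v2. jost_plus_2 q l v1 v2 \<longrightarrow>
      (let w1 = dv (\<lambda>x. (v2 x)^2); w2 = dv (\<lambda>x. (v1 x)^2) in
        Lt_defined qh rh w1 w2 \<and> (\<forall>x. Lt_op qh rh w1 w2 x = (- (l^2 * w1 x), - (l^2 * w2 x)))))"
proof -
  note rd = assms(1)
  show ?thesis unfolding qh_def rh_def
  proof (intro conjI ballI allI impI)
    fix l v1 v2 assume l: "l \<in> D_plus \<union> Sigma_contour" and j: "jost_minus_1 q l v1 v2"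
    have lax: "lax_sol q l v1 v2"
      and tu: "((\<lambda>x. v1 x * exp (\<i> * l^2 * of_real x)) \<longlongrightarrow> 1) at_bot"
      and tv: "((\<lambda>x. v2 x * exp (\<i> * l^2 * of_real x)) \<longlongrightarrow> 0) at_bot"
      using j unfolding jost_minus_1_def by auto
    note t = tail2[OF tu tv mult_zero_right[of "1::complex"] E_bot1[OF Dplus_Im[OF l]]]
    show "let w1 = dv (\<lambda>x. (v1 x)^2); w2 = (\<lambda>x. - dv (\<lambda>x. (v2 x)^2) x) in
        L_defined (dv q) (\<lambda>x. cnj (dv q x)) w1 w2 \<and>
        (\<forall>x. L_op (dv q) (\<lambda>x. cnj (dv q x)) w1 w2 x = (- (l^2 * w1 x), - (l^2 * w2 x)))"
      by (rule L_main[OF rd lax t(1) t(2) t(3)])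
  next
    fix l v1 v2 assume l: "l \<in> D_minus \<union> Sigma_contour" and j: "jost_minus_2 q l v1 v2"
    have lax: "lax_sol q l v1 v2"
      and tu: "((\<lambda>x. v1 x * exp (- \<i> * l^2 * of_real x)) \<longlongrightarrow> 0) at_bot"
      and tv: "((\<lambda>x. v2 x * exp (- \<i> * l^2 * of_real x)) \<longlongrightarrow> 1) at_bot"
      using j unfolding jost_minus_2_def by auto
    note t = tail2[OF tu tv mult_zero_left[of "1::complex"] E_bot2[OF Dminus_Im[OF l]]]
    show "let w1 = dv (\<lambda>x. (v1 x)^2); w2 = (\<lambda>x. - dv (\<lambda>x. (v2 x)^2) x) in
        L_defined (dv q) (\<lambda>x. cnj (dv q x)) w1 w2 \<and>
        (\<forall>x. L_op (dv q) (\<lambda>x. cnj (dv q x)) w1 w2 x = (- (l^2 * w1 x), - (l^2 * w2 x)))"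
      by (rule L_main[OF rd lax t(1) t(2) t(3)])
  next
    fix l v1 v2 assume l: "l \<in> D_minus \<union> Sigma_contour" and j: "jost_plus_1 q l v1 v2"
    have lax: "lax_sol q l v1 v2"
      and tu: "((\<lambda>x. v1 x * exp (\<i> * l^2 * of_real x)) \<longlongrightarrow> 1) at_top"
      and tv: "((\<lambda>x. v2 x * exp (\<i> * l^2 * of_real x)) \<longlongrightarrow> 0) at_top"
      using j unfolding jost_plus_1_def by auto
    note t = tail2[OF tu tv mult_zero_right[of "1::complex"] E_top1[OF Dminus_Im[OF l]]]
    show "let w1 = dv (\<lambda>x. (v2 x)^2); w2 = dv (\<lambda>x. (v1 x)^2) in
        Lt_defined (dv q) (\<lambda>x. cnj (dv q x)) w1 w2 \<and>
        (\<forall>x. Lt_op (dv q) (\<lambda>x. cnj (dv q x)) w1 w2 x = (- (l^2 * w1 x), - (l^2 * w2 x)))"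
      by (rule Lt_main[OF rd lax t(1) t(2) t(3)])
  next
    fix l v1 v2 assume l: "l \<in> D_plus \<union> Sigma_contour" and j: "jost_plus_2 q l v1 v2"
    have lax: "lax_sol q l v1 v2"
      and tu: "((\<lambda>x. v1 x * exp (- \<i> * l^2 * of_real x)) \<longlongrightarrow> 0) at_top"
      and tv: "((\<lambda>x. v2 x * exp (- \<i> * l^2 * of_real x)) \<longlongrightarrow> 1) at_top"
      using j unfolding jost_plus_2_def by auto
    note t = tail2[OF tu tv mult_zero_left[of "1::complex"] E_top2[OF Dplus_Im[OF l]]]
    show "let w1 = dv (\<lambda>x. (v2 x)^2); w2 = dv (\<lambda>x. (v1 x)^2) in
        Lt_defined (dv q) (\<lambda>x. cnj (dv q x)) w1 w2 \<and>
        (\<forall>x. Lt_op (dv q) (\<lambda>x. cnj (dv q x)) w1 w2 x = (- (l^2 * w1 x), - (l^2 * w2 x)))"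
      by (rule Lt_main[OF rd lax t(1) t(2) t(3)])
  qed
qed


end
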